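(* Let $(G,\cdot)$ be a loop and $(H,\cdot)$ a non-trivial subloop. Then $(xs\cdot z)s=x(sz\cdot s)$ holds for all $x,z\in G$ and $s\in H$ if and only if $(R_s^{-1},L_sR_s,R_s)\in \mathrm{S_{1st}AUT}(G_H)$ for every $s\in H$.
   Context: Juxtaposition binds more tightly than $\cdot$. Maps are written on the right and composed left to right; $xR_s=x\cdot s$, $xL_s=s\cdot x$. $SSYM(G_H)$ is the set of bijections $A$ of $G$ with $HA=H$. $\mathrm{S_{1st}AUT}(G_H)$ is the set of triples $(U,V,W)$ with $U,V,W\in SSYM(G_H)$ and $xU\cdot yV=(x\cdot y)W$ for all $x,y\in G$. *)

theory Defs
  imports Main
begin

definition loop :: "'a set \<Rightarrow> ('a \<Rightarrow> 'a \<Rightarrow> 'a) \<Rightarrow> 'a \<Rightarrow> bool" where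
  "loop G m e \<longleftrightarrow>
     e \<in> G \<and>
     (\<forall>x\<in>G. \<forall>y\<in>G. m x y \<in> G) \<and>
     (\<forall>x\<in>G. m e x = x \<and> m x e = x) \<and>
     (\<forall>a\<in>G. \<forall>b\<in>G. (\<exists>!x. x \<in> G \<and> m a x = b) \<and> (\<exists>!y. y \<in> G \<and> m y a = b))"

definition subloop :: "'a set \<Rightarrow> 'a set \<Rightarrow> ('a \<Rightarrow> 'a \<Rightarrow> 'a) \<Rightarrow> 'a \<Rightarrow> bool" where
  "subloop H G m e \<longleftrightarrow> H \<subseteq> G \<and> loop H m e"

text \<open>SSYM(G_H): bijections A of G with H A = H (maps act on the right, x A = A x).\<close>
definition SSYM :: "'a set \<Rightarrow> 'a set \<Rightarrow> ('a \<Rightarrow> 'a) set" where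
  "SSYM G H = {A. bij_betw A G G \<and> A ` H = H}"

definition S1stAUT :: "'a set \<Rightarrow> 'a set \<Rightarrow> ('a \<Rightarrow> 'a \<Rightarrow> 'a)
    \<Rightarrow> (('a \<Rightarrow> 'a) \<times> ('a \<Rightarrow> 'a) \<times> ('a \<Rightarrow> 'a)) set" where
  "S1stAUT G H m = {(U, V, W). U \<in> SSYM G H \<and> V \<in> SSYM G H \<and> W \<in> SSYM G H \<and>
      (\<forall>x\<in>G. \<forall>y\<in>G. m (U x) (V y) = W (m x y))}"

definition Rt :: "('a \<Rightarrow> 'a \<Rightarrow> 'a) \<Rightarrow> 'a \<Rightarrow> 'a \<Rightarrow> 'a" where
  "Rt m s = (\<lambda>x. m x s)"

definition Lt :: "('a \<Rightarrow> 'a \<Rightarrow> 'a) \<Rightarrow> 'a \<Rightarrow> 'a \<Rightarrow> 'a" where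
  "Lt m s = (\<lambda>x. m s x)"

definition Rt_inv :: "'a set \<Rightarrow> ('a \<Rightarrow> 'a \<Rightarrow> 'a) \<Rightarrow> 'a \<Rightarrow> 'a \<Rightarrow> 'a" where
  "Rt_inv G m s = the_inv_into G (Rt m s)"

end

theory Submission
  imports Defs
begin

lemma loop_Rt_bij:
  assumes L: "loop G m e" and s: "s \<in> G"
  shows "bij_betw (Rt m s) G G"
proof -
  have cl: "\<forall>x\<in>G. \<forall>y\<in>G. m x y \<in> G" and u: "\<forall>a\<in>G. \<forall>b\<in>G. (\<exists>!y. y \<in> G \<and> m y a = b)"
    using L unfolding loop_def by auto
  show ?thesis unfolding bij_betw_def inj_on_def Rt_def
  proof (intro conjI ballI impI)
    fix x y assume "x \<in> G" "y \<in> G" "m x s = m y s"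
    then show "x = y" using u s cl by metis
  next
    show "(\<lambda>x. m x s) ` G = G"
    proof
      show "(\<lambda>x. m x s) ` G \<subseteq> G" using cl s by auto
      show "G \<subseteq> (\<lambda>x. m x s) ` G"
      proof
        fix b assume "b \<in> G"
        then obtain y where "y \<in> G" "m y s = b" using u s by metis
        then show "b \<in> (\<lambda>x. m x s) ` G" by auto
      qed
    qed
  qed
qed

lemma loop_Lt_bij:
  assumes L: "loop G m e" and s: "s \<in> G"
  shows "bij_betw (Lt m s) G G"
proof -
  have cl: "\<forall>x\<in>G. \<forall>y\<in>G. m x y \<in> G" and u: "\<forall>a\<in>G. \<forall>b\<in>G. (\<exists>!x. x \<in> G \<and> m a x = b)"
    using L unfolding loop_def by auto
  show ?thesis unfolding bij_betw_def inj_on_def Lt_def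
  proof (intro conjI ballI impI)
    fix x y assume "x \<in> G" "y \<in> G" "m s x = m s y"
    then show "x = y" using u s cl by metis
  next
    show "(\<lambda>x. m s x) ` G = G"
    proof
      show "(\<lambda>x. m s x) ` G \<subseteq> G" using cl s by auto
      show "G \<subseteq> (\<lambda>x. m s x) ` G"
      proof
        fix b assume "b \<in> G"
        then obtain y where "y \<in> G" "m s y = b" using u s by metis
        then show "b \<in> (\<lambda>x. m s x) ` G" by auto
      qed
    qed
  qed
qed

lemma inv_image_sub:
  assumes "bij_betw f G G" "bij_betw f H H" "H \<subseteq> G"
  shows "the_inv_into G f ` H = H"
proof
  have inj: "inj_on f G" using assms(1) bij_betw_def by auto
  show "the_inv_into G f ` H \<subseteq> H"
  proof
    fix y assume "y \<in> the_inv_into G f ` H"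
    then obtain h where h: "h \<in> H" "y = the_inv_into G f h" by auto
    then obtain h' where "h' \<in> H" "h = f h'" using assms(2) unfolding bij_betw_def by auto
    then show "y \<in> H" using h inj assms(3) the_inv_into_f_f by fastforce
  qed
  show "H \<subseteq> the_inv_into G f ` H"
  proof
    fix h assume "h \<in> H"
    moreover have "h \<in> G" using \<open>h \<in> H\<close> assms(3) by auto
    ultimately have "the_inv_into G f (f h) = h" "f h \<in> H" using inj assms(2) the_inv_into_f_f
      by (auto simp: bij_betw_def)
    then show "h \<in> the_inv_into G f ` H" by (metis image_eqI)
  qed
qed

theorem theorem3p4:
  fixes G H :: "'a set" and m :: "'a \<Rightarrow> 'a \<Rightarrow> 'a" and e :: 'a
  assumes "loop G m e"
    and "subloop H G m e"
    and "H \<noteq> {e}"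
  shows "(\<forall>x\<in>G. \<forall>z\<in>G. \<forall>s\<in>H. m (m (m x s) z) s = m x (m (m s z) s))
     \<longleftrightarrow> (\<forall>s\<in>H. (Rt_inv G m s, Rt m s \<circ> Lt m s, Rt m s) \<in> S1stAUT G H m)"
proof -
  have HG: "H \<subseteq> G" and LH: "loop H m e" using assms(2) unfolding subloop_def by auto
  have cl: "\<forall>x\<in>G. \<forall>y\<in>G. m x y \<in> G" using assms(1) unfolding loop_def by auto
  have SS: "Rt_inv G m s \<in> SSYM G H \<and> (Rt m s \<circ> Lt m s) \<in> SSYM G H \<and> Rt m s \<in> SSYM G H"
    if s: "s \<in> H" for s
  proof -
    have sG: "s \<in> G" using s HG by auto
    have a: "bij_betw (Rt m s) G G" "bij_betw (Lt m s) G G"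
      using loop_Rt_bij[OF assms(1) sG] loop_Lt_bij[OF assms(1) sG] .
    have b: "bij_betw (Rt m s) H H" "bij_betw (Lt m s) H H"
      using loop_Rt_bij[OF LH s] loop_Lt_bij[OF LH s] .
    have c: "bij_betw (Rt m s \<circ> Lt m s) G G" "bij_betw (Rt m s \<circ> Lt m s) H H"
      using bij_betw_trans[OF a(2) a(1)] bij_betw_trans[OF b(2) b(1)] by auto
    show ?thesis unfolding SSYM_def Rt_inv_def
      using a b c bij_betw_the_inv_into[OF a(1)] inv_image_sub[OF a(1) b(1) HG]
      by (auto simp: bij_betw_def)
  qed
  have inv: "Rt_inv G m s x \<in> G \<and> m (Rt_inv G m s x) s = x" if "s \<in> H" "x \<in> G" for s x
  proof -
    have a: "bij_betw (Rt m s) G G" using loop_Rt_bij[OF assms(1)] that HG by auto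
    then show ?thesis unfolding Rt_inv_def using that
      by (metis Rt_def bij_betw_def f_the_inv_into_f the_inv_into_into subset_refl)
  qed
  have inv2: "Rt_inv G m s (m x s) = x" if "s \<in> H" "x \<in> G" for s x
  proof -
    have a: "bij_betw (Rt m s) G G" using loop_Rt_bij[OF assms(1)] that HG by auto
    then show ?thesis unfolding Rt_inv_def using that
      by (metis Rt_def bij_betw_def the_inv_into_f_f)
  qed
  show ?thesis
  proof
    assume I: "\<forall>x\<in>G. \<forall>z\<in>G. \<forall>s\<in>H. m (m (m x s) z) s = m x (m (m s z) s)"
    show "\<forall>s\<in>H. (Rt_inv G m s, Rt m s \<circ> Lt m s, Rt m s) \<in> S1stAUT G H m"
    proof
      fix s assume s: "s \<in> H"
      have "m (Rt_inv G m s x) ((Rt m s \<circ> Lt m s) y) = Rt m s (m x y)" if "x \<in> G" "y \<in> G" for x y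
        using inv[OF s that(1)] I that s by (auto simp: Rt_def Lt_def) (metis)
      then show "(Rt_inv G m s, Rt m s \<circ> Lt m s, Rt m s) \<in> S1stAUT G H m"
        using SS[OF s] unfolding S1stAUT_def by auto
    qed
  next
    assume A: "\<forall>s\<in>H. (Rt_inv G m s, Rt m s \<circ> Lt m s, Rt m s) \<in> S1stAUT G H m"
    show "\<forall>x\<in>G. \<forall>z\<in>G. \<forall>s\<in>H. m (m (m x s) z) s = m x (m (m s z) s)"
    proof (intro ballI)
      fix x z s assume x: "x \<in> G" and z: "z \<in> G" and s: "s \<in> H"
      have xs: "m x s \<in> G" using cl x s HG by auto
      have "m (Rt_inv G m s (m x s)) ((Rt m s \<circ> Lt m s) z) = Rt m s (m (m x s) z)"
        using A s xs z unfolding S1stAUT_def by auto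
      then show "m (m (m x s) z) s = m x (m (m s z) s)"
        using inv2[OF s x] by (simp add: Rt_def Lt_def)
    qed
  qed
qed

end
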